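(* Let ${\mathsf K},{\mathsf N}\ge1$, $t\in\{0,\ldots,{\mathsf K}-1\}$, and $\mathbb{D}\in\mathbb{F}_2^{{\mathsf K}\times{\mathsf N}}$ with rows $\mathbf y_1,\ldots,\mathbf y_{\mathsf K}$. Let $\mathcal L\subseteq[{\mathsf K}]$ satisfy $|\mathcal L|=\mathrm{rank}_2(\mathbb{D}_{\mathcal L})=\mathrm{rank}_2(\mathbb{D})$, let $\mathcal A\subseteq[{\mathsf K}]\setminus\mathcal L$ with $|\mathcal A|=t+1$, and set $\mathcal B=\mathcal L\cup\mathcal A$. Let $\mathcal W\subseteq\mathcal B$ with $|\mathcal W|=t$ and $i\in[{\mathsf N}]$. Then the number of users $k\in\mathcal B\setminus\mathcal W$ satisfying both $\mathrm{rank}_2(\mathbb{D}_{\mathcal B\setminus(\mathcal W\cup\{k\})})=|\mathcal L|$ and $y_{k,i}\neq0$ is even. Equivalently: in the sum $\bigoplus_{\mathcal V\in\mathscr V_{\mathcal B}}W_{\mathcal B\setminus\mathcal V}$, the number of multicast messages $W_{\mathcal B\setminus\mathcal V}$ (with $\mathcal V\in\mathscr V_{\mathcal B}$) that contain the subfile $F_{i,\mathcal W}$ with nonzero coefficient is even.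
   Context: $\mathbb{D}_{\mathcal S}$ denotes the submatrix of $\mathbb{D}$ formed by the rows with indices in $\mathcal S$. Subfiles: for $i\in[{\mathsf N}]$ and $\mathcal W\subseteq[{\mathsf K}]$ with $|\mathcal W|=t$, $F_{i,\mathcal W}$ is a vector over $\mathbb{F}_2$ (all of a common length). Blocks: $B_{k,\mathcal W}=\sum_{n\in[{\mathsf N}]}y_{k,n}F_{n,\mathcal W}$. Multicast messages: for $\mathcal S\subseteq[{\mathsf K}]$ with $|\mathcal S|=t+1$, $W_{\mathcal S}=\bigoplus_{k\in\mathcal S}B_{k,\mathcal S\setminus\{k\}}$ (sum over $\mathbb{F}_2$). For $\mathcal B\subseteq[{\mathsf K}]$, $\mathscr V_{\mathcal B}$ is the family of subsets $\mathcal V\subseteq\mathcal B$ with $|\mathcal V|=|\mathcal L|$ and $\mathrm{rank}_2(\mathbb{D}_{\mathcal V})=|\mathcal L|$. Note that for $\mathcal V\in\mathscr V_{\mathcal B}$, $|\mathcal B\setminus\mathcal V|=t+1$, and $F_{i,\mathcal W}$ appears in $W_{\mathcal B\setminus\mathcal V}$ with coefficient $y_{k,i}$ exactly when $\mathcal B\setminus\mathcal V=\mathcal W\cup\{k\}$. *)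

theory Defs
  imports "HOL-Library.Z2" "Jordan_Normal_Form.DL_Rank"
begin

text \<open>GF(2) rank of the submatrix of D formed by the rows with indices in S
  (rows indexed from 0). It is the library rank (dimension of the column span)
  of the matrix whose columns are these rows, i.e. of the transpose of D_S.\<close>
definition rank2 :: "bit mat \<Rightarrow> nat set \<Rightarrow> nat" where
  "rank2 D S = vec_space.rank (dim_col D)
     (mat_of_cols (dim_col D) (map (row D) (sorted_list_of_set S)))"

end

theory Submission
  imports Defs
begin

context vec_space begin

definition dd :: "'a vec set \<Rightarrow> nat" where
  "dd X = vectorspace.dim class_ring (span_vs X)"

lemma dd_li_le:
  assumes "finite Y" "Y \<subseteq> carrier_vec n" "I \<subseteq> span Y" "lin_indpt I"
  shows "card I \<le> dd Y"
proof -
  have vs: "vectorspace class_ring (span_vs Y)"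
    using assms span_is_subspace subspace_def subspace_is_vs by simp
  have fd: "vectorspace.fin_dim class_ring (span_vs Y)" using fin_dim_span assms by simp
  have sub: "submodule class_ring (span Y) V" using assms span_is_submodule by simp
  have li: "\<not> LinearCombinations.module.lin_dep class_ring (span_vs Y) I"
    using span_li_not_depend(2)[OF assms(3) sub] assms(4) by simp
  show ?thesis unfolding dd_def
    using vectorspace.li_le_dim(2)[OF vs fd _ li] assms(3) vectorspace.carrier_vs_is_self[OF vs] by simp
qed

lemma dd_max:
  assumes "finite X" "X \<subseteq> carrier_vec n"
  shows "\<exists>M\<subseteq>X. lin_indpt M \<and> dd X = card M"
proof -
  obtain M where M: "finite M" "maximal M (\<lambda>T. T \<subseteq> X \<and> lin_indpt T)"
    using maximal_exists_superset[of X "\<lambda>T. T \<subseteq> X \<and> lin_indpt T" "{}"] assms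
    by (auto simp: lin_dep_def)
  then have "dd X = card M" unfolding dd_def using dim_span[OF assms(2,1)] by blast
  with M show ?thesis unfolding maximal_def by blast
qed

lemma dd_mono_span:
  assumes "finite X" "X \<subseteq> carrier_vec n" "finite Y" "Y \<subseteq> carrier_vec n" "X \<subseteq> span Y"
  shows "dd X \<le> dd Y"
proof -
  obtain M where M: "M \<subseteq> X" "lin_indpt M" "dd X = card M" using dd_max[OF assms(1,2)] by blast
  have "M \<subseteq> span Y" using M(1) assms(5) by (rule subset_trans)
  then have "card M \<le> dd Y" by (rule dd_li_le[OF assms(3,4) _ M(2)])
  then show ?thesis using M(3) by simp
qed

lemma dd_mono:
  assumes "finite Y" "Y \<subseteq> carrier_vec n" "X \<subseteq> Y"
  shows "dd X \<le> dd Y"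
proof -
  have "finite X" using assms(1,3) finite_subset by blast
  moreover have "X \<subseteq> carrier_vec n" using assms(2,3) by blast
  moreover have "X \<subseteq> span Y" using assms(3) in_own_span[OF assms(2)] by blast
  ultimately show ?thesis by (rule dd_mono_span[OF _ _ assms(1,2)])
qed

lemma dd_le_card:
  assumes "finite X" "X \<subseteq> carrier_vec n"
  shows "dd X \<le> card X"
proof -
  obtain M where M: "M \<subseteq> X" "lin_indpt M" "dd X = card M" using dd_max[OF assms(1,2)] by blast
  have "card M \<le> card X" by (rule card_mono[OF assms(1) M(1)])
  then show ?thesis using M(3) by simp
qed

lemma dd_indpt:
  assumes "finite X" "X \<subseteq> carrier_vec n" "lin_indpt X"
  shows "dd X = card X"
  using dd_le_card[OF assms(1,2)] dd_li_le[OF assms(1,2) in_own_span[OF assms(2)] assms(3)] by simp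

lemma dd_full:
  assumes "finite X" "X \<subseteq> carrier_vec n" "dd X = card X"
  shows "lin_indpt X"
  using full_dim_span[OF assms(2,1)] assms(3) unfolding dd_def by simp

end

lemma bit_one_plus: "((1::bit) + y = 0) \<longleftrightarrow> y \<noteq> 0"
  by (cases y) simp_all

lemma bit_sum_even:
  fixes g :: "nat \<Rightarrow> bit"
  assumes "finite T"
  shows "(sum g T = 0) \<longleftrightarrow> even (card {k\<in>T. g k \<noteq> 0})"
  using assms
proof (induction T rule: finite_induct)
  case empty then show ?case by simp
next
  case (insert x T)
  have fin: "finite {k\<in>T. g k \<noteq> 0}" using insert(1) by simp
  have s: "sum g (insert x T) = g x + sum g T" by (rule sum.insert[OF insert(1,2)])
  show ?case
  proof (cases "g x = 0")
    case True
    then have e: "{k\<in>insert x T. g k \<noteq> 0} = {k\<in>T. g k \<noteq> 0}" by auto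
    have "sum g (insert x T) = sum g T" unfolding s True by (rule add.left_neutral)
    then show ?thesis unfolding e using insert(3) by simp
  next
    case False
    then have e: "{k\<in>insert x T. g k \<noteq> 0} = insert x {k\<in>T. g k \<noteq> 0}" by auto
    have "x \<notin> {k\<in>T. g k \<noteq> 0}" using insert(2) by auto
    then have c: "card {k\<in>insert x T. g k \<noteq> 0} = Suc (card {k\<in>T. g k \<noteq> 0})"
      unfolding e using fin by simp
    have g1: "g x = 1" using False by simp
    have "(sum g (insert x T) = 0) \<longleftrightarrow> sum g T \<noteq> 0" unfolding s g1 by (rule bit_one_plus)
    then show ?thesis unfolding c using insert(3) by simp
  qed
qed

lemma bit_double: "(x::bit) + x = 0"
  by (cases x) simp_all

context vec_space begin

lemma main_gen:
  fixes f :: "nat \<Rightarrow> 'a vec" and S :: "nat set" and r k0 :: nat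
  assumes finS: "finite S" and cS: "card S = r + 1" and fS: "f ` S \<subseteq> carrier_vec n"
    and bound: "\<And>X. X \<subseteq> S \<Longrightarrow> dd (f ` X) \<le> r"
    and k0S: "k0 \<in> S" and dk0: "dd (f ` (S - {k0})) = r"
  shows "\<exists>c. (\<forall>j<n. f k0 $ j = (\<Sum>k\<in>S-{k0}. c k * f k $ j)) \<and>
             (\<forall>k\<in>S-{k0}. (dd (f ` (S - {k})) = r) \<longleftrightarrow> c k \<noteq> 0)"
proof -
  define U where "U = S - {k0}"
  have finU: "finite U" using finS U_def by simp
  have finfU: "finite (f ` U)" using finU by simp
  have cU: "card U = r" using cS k0S finS U_def by simp
  have fU: "f ` U \<subseteq> carrier_vec n" using fS U_def by auto
  have dU: "dd (f ` U) = r" using dk0 U_def by simp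
  have "dd (f ` U) \<le> card (f ` U)" using dd_le_card[OF finfU fU] .
  moreover have "card (f ` U) \<le> card U" using finU card_image_le by blast
  ultimately have cfU: "card (f ` U) = card U" using dU cU by linarith
  then have injU: "inj_on f U" using finU eq_card_imp_inj_on by blast
  have indU: "lin_indpt (f ` U)" using dd_full[OF finfU fU] dU cfU cU by simp
  have fk0: "f k0 \<in> carrier_vec n" using fS k0S by auto
  have k0span: "f k0 \<in> span (f ` U)"
  proof (rule ccontr)
    assume nin: "f k0 \<notin> span (f ` U)"
    then have nin2: "f k0 \<notin> f ` U" using in_own_span[OF fU] by auto
    then have li: "lin_indpt (f ` U \<union> {f k0})"
      using lin_dep_iff_in_span[OF fU indU fk0] nin by simp
    have eqS: "f ` U \<union> {f k0} = f ` S" using k0S U_def by auto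
    have "card (f ` U \<union> {f k0}) = r + 1" using nin2 finfU cfU cU by simp
    moreover have "dd (f ` U \<union> {f k0}) = card (f ` U \<union> {f k0})"
      by (rule dd_indpt) (use finfU fU fk0 li in auto)
    ultimately have "dd (f ` S) = r + 1" using eqS by simp
    then show False using bound[of S] by simp
  qed
  obtain a where a: "f k0 = lincomb a (f ` U)"
    using k0span unfolding finite_span[OF finfU fU] by blast
  have coord: "f k0 $ j = (\<Sum>k\<in>U. a (f k) * f k $ j)" if j: "j < n" for j
  proof -
    have "f k0 $ j = (\<Sum>x\<in>f ` U. a x * x $ j)" unfolding a by (rule lincomb_index[OF j fU])
    also have "\<dots> = (\<Sum>k\<in>U. a (f k) * f k $ j)" by (simp only: sum.reindex[OF injU] o_def)
    finally show ?thesis .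
  qed
  have kchar: "(dd (f ` (S - {k})) = r) \<longleftrightarrow> a (f k) \<noteq> 0" if kU: "k \<in> U" for k
  proof -
    define Uk where "Uk = U - {k}"
    have finUk: "finite Uk" using finU Uk_def by simp
    have fUk: "f ` Uk \<subseteq> carrier_vec n" using fU Uk_def by auto
    have finfUk: "finite (f ` Uk)" using finUk by simp
    have fk: "f k \<in> carrier_vec n" using fU kU by auto
    have nk: "f k \<notin> f ` Uk" using injU kU Uk_def by (auto simp: inj_on_def)
    have fUins: "f ` U = insert (f k) (f ` Uk)" using kU Uk_def by auto
    have Sk: "f ` (S - {k}) = insert (f k0) (f ` Uk)" using kU k0S Uk_def U_def by auto
    have fSk: "f ` (S - {k}) \<subseteq> carrier_vec n" using fS by auto
    have finfSk: "finite (f ` (S - {k}))" using finS by simp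
    define Lk where "Lk = lincomb a (f ` Uk)"
    have Lspan: "Lk \<in> span (f ` Uk)" unfolding Lk_def by (rule in_spanI[OF refl finfUk subset_refl])
    have Ldim: "Lk \<in> carrier_vec n" unfolding Lk_def by (rule carrier_vecI, rule lincomb_dim[OF finfUk fUk])
    have decj: "f k0 $ j = a (f k) * f k $ j + Lk $ j" if j: "j < n" for j
    proof -
      have "f k0 $ j = (\<Sum>x\<in>f ` U. a x * x $ j)" unfolding a by (rule lincomb_index[OF j fU])
      also have "\<dots> = a (f k) * f k $ j + (\<Sum>x\<in>f ` Uk. a x * x $ j)"
        unfolding fUins by (rule sum.insert[OF finfUk nk])
      also have "\<dots> = a (f k) * f k $ j + Lk $ j"
        unfolding Lk_def by (simp only: lincomb_index[OF j fUk])
      finally show ?thesis .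
    qed
    show ?thesis
    proof (cases "a (f k) = 0")
      case False
      define w where "w = inverse (a (f k)) \<cdot>\<^sub>v (f k0 + (- 1) \<cdot>\<^sub>v Lk)"
      have fkeq: "f k = w"
      proof (rule eq_vecI)
        fix j assume "j < dim_vec w"
        then have j: "j < n" unfolding w_def using Ldim by simp
        have "w $ j = inverse (a (f k)) * (f k0 $ j - Lk $ j)"
          unfolding w_def using j fk0 Ldim by simp
        also have "\<dots> = f k $ j" unfolding decj[OF j] using False by (simp add: field_simps)
        finally show "f k $ j = w $ j" by simp
      next
        show "dim_vec (f k) = dim_vec w" unfolding w_def using fk fk0 Ldim by simp
      qed
      have "f k0 \<in> span (f ` (S - {k}))" using span_mem[OF fSk] Sk by simp
      moreover have "Lk \<in> span (f ` (S - {k}))"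
        using Lspan span_is_monotone[of "f ` Uk" "f ` (S - {k})"] Sk by auto
      then have "(- 1) \<cdot>\<^sub>v Lk \<in> span (f ` (S - {k}))" by (rule smult_in_span[OF fSk])
      ultimately have "f k0 + (- 1) \<cdot>\<^sub>v Lk \<in> span (f ` (S - {k}))"
        using span_add1[OF fSk] by simp
      then have "w \<in> span (f ` (S - {k}))" unfolding w_def by (rule smult_in_span[OF fSk])
      then have "f k \<in> span (f ` (S - {k}))" using fkeq by simp
      moreover have "f ` Uk \<subseteq> span (f ` (S - {k}))"
        using in_own_span[OF fSk] Sk by auto
      ultimately have "f ` U \<subseteq> span (f ` (S - {k}))" using fUins by auto
      then have "r \<le> dd (f ` (S - {k}))"
        using dd_mono_span[OF finfU fU finfSk fSk] dU by simp
      moreover have "dd (f ` (S - {k})) \<le> r" using bound[of "S - {k}"] by blast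
      ultimately have "dd (f ` (S - {k})) = r" by linarith
      then show ?thesis using False by blast
    next
      case True
      have "f k0 = Lk"
      proof (rule eq_vecI)
        fix j assume "j < dim_vec Lk"
        then have j: "j < n" using Ldim by simp
        show "f k0 $ j = Lk $ j" unfolding decj[OF j] True by simp
      next
        show "dim_vec (f k0) = dim_vec Lk" using fk0 Ldim by simp
      qed
      then have "f k0 \<in> span (f ` Uk)" using Lspan by simp
      then have "f ` (S - {k}) \<subseteq> span (f ` Uk)" using Sk in_own_span[OF fUk] by auto
      then have "dd (f ` (S - {k})) \<le> dd (f ` Uk)"
        using dd_mono_span[OF finfSk fSk finfUk fUk] by blast
      also have "\<dots> \<le> card (f ` Uk)" using dd_le_card[OF finfUk fUk] .
      also have "\<dots> \<le> card Uk" using card_image_le[OF finUk] .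
      also have "\<dots> < r" using cU kU finU Uk_def card_gt_0_iff[of U] by (auto simp add: card_Diff_singleton)
      finally have "dd (f ` (S - {k})) \<noteq> r" by simp
      then show ?thesis using True by blast
    qed
  qed
  show ?thesis
    by (rule exI[of _ "\<lambda>k. a (f k)"]) (use coord kchar U_def in blast)
qed

end

lemma main_comb:
  fixes f :: "nat \<Rightarrow> bit vec" and S :: "nat set" and r N i :: nat
  assumes finS: "finite S" and cS: "card S = r + 1" and fS: "f ` S \<subseteq> carrier_vec N"
    and bound: "\<And>X. X \<subseteq> S \<Longrightarrow> vec_space.dd N (f ` X) \<le> r" and iN: "i < N"
  shows "even (card {k\<in>S. vec_space.dd N (f ` (S - {k})) = r \<and> f k $ i \<noteq> 0})"
proof -
  define T where "T = {k\<in>S. vec_space.dd N (f ` (S - {k})) = r}"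
  have finT: "finite T" unfolding T_def by (rule finite_subset[OF _ finS]) blast
  have setT: "{k\<in>S. vec_space.dd N (f ` (S - {k})) = r \<and> f k $ i \<noteq> 0} = {k\<in>T. f k $ i \<noteq> 0}"
    unfolding T_def by blast
  have z: "(\<Sum>k\<in>T. f k $ i) = 0"
  proof (cases "T = {}")
    case True then show ?thesis by simp
  next
    case False
    then obtain k0 where k0T: "k0 \<in> T" by blast
    then have k0S: "k0 \<in> S" and dk0: "vec_space.dd N (f ` (S - {k0})) = r" unfolding T_def by auto
    obtain c where c1: "\<forall>j<N. f k0 $ j = (\<Sum>k\<in>S-{k0}. c k * f k $ j)"
      and c2: "\<forall>k\<in>S-{k0}. (vec_space.dd N (f ` (S - {k})) = r) \<longleftrightarrow> c k \<noteq> 0"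
      using vec_space.main_gen[OF finS cS fS bound k0S dk0] by blast
    define U where "U = S - {k0}"
    define U1 where "U1 = {k\<in>U. c k = 1}"
    have finU: "finite U" using finS U_def by simp
    have Tchar: "T = insert k0 U1"
    proof (rule Set.set_eqI)
      fix k show "k \<in> T \<longleftrightarrow> k \<in> insert k0 U1"
      proof (cases "k = k0")
        case True then show ?thesis using k0T by simp
      next
        case False
        show ?thesis
        proof (cases "k \<in> U")
          case True
          have "k \<in> T \<longleftrightarrow> c k \<noteq> 0" using c2 True unfolding T_def U_def by auto
          then show ?thesis using False True unfolding U1_def by simp
        next
          case nU: False
          then have "k \<notin> S" using False U_def by blast
          then show ?thesis using nU False unfolding T_def U1_def by blast
        qed
      qed
    qed
    have k0nU1: "k0 \<notin> U1" using U1_def U_def by auto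
    have finU1: "finite U1" using finU U1_def by simp
    have "f k0 $ i = (\<Sum>k\<in>U. c k * f k $ i)" using c1 iN unfolding U_def by blast
    also have "\<dots> = (\<Sum>k\<in>U. if c k = 1 then f k $ i else 0)"
    proof (rule sum.cong[OF refl])
      fix x show "c x * f x $ i = (if c x = 1 then f x $ i else 0)"
        by (cases "c x") simp_all
    qed
    also have "\<dots> = (\<Sum>k\<in>U1. f k $ i)" unfolding U1_def by (rule sum.inter_filter[OF finU, symmetric])
    finally have e: "f k0 $ i = (\<Sum>k\<in>U1. f k $ i)" .
    have "(\<Sum>k\<in>T. f k $ i) = f k0 $ i + (\<Sum>k\<in>U1. f k $ i)"
      unfolding Tchar by (rule sum.insert[OF finU1 k0nU1])
    also have "\<dots> = 0" unfolding e by (rule bit_double)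
    finally show ?thesis .
  qed
  have ev: "even (card {k\<in>T. f k $ i \<noteq> 0})"
    by (rule iffD1[OF bit_sum_even[OF finT, of "\<lambda>k. f k $ i"] z])
  show ?thesis unfolding setT by (rule ev)
qed

lemma rank2_dd:
  assumes "finite X"
  shows "rank2 D X = vec_space.dd (dim_col D) (row D ` X)"
proof -
  have "set (map (row D) (sorted_list_of_set X)) \<subseteq> carrier_vec (dim_col D)" by auto
  then have "cols (mat_of_cols (dim_col D) (map (row D) (sorted_list_of_set X)))
     = map (row D) (sorted_list_of_set X)" by simp
  then show ?thesis unfolding rank2_def vec_space.rank_def vec_space.dd_def
    using assms by simp
qed

theorem lemma1:
  fixes K N t i :: nat and D :: "bit mat" and L A W :: "nat set"
  assumes "K \<ge> 1" and "N \<ge> 1" and "t < K"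
    and "D \<in> carrier_mat K N"
    and "L \<subseteq> {0..<K}"
    and "card L = rank2 D L" and "rank2 D L = rank2 D {0..<K}"
    and "A \<subseteq> {0..<K} - L" and "card A = t + 1"
    and "W \<subseteq> L \<union> A" and "card W = t"
    and "i < N"
  shows "even (card {k \<in> (L \<union> A) - W.
            rank2 D ((L \<union> A) - (W \<union> {k})) = card L \<and> D $$ (k, i) \<noteq> 0})"
proof -
  define S where "S = (L \<union> A) - W"
  have dc: "dim_col D = N" "dim_row D = K" using assms(4) by auto
  have finL: "finite L" using assms(5) finite_subset by blast
  have finA: "finite A" using assms(8) finite_subset by blast
  have finW: "finite W" using assms(10) finL finA finite_subset by blast
  have SK: "S \<subseteq> {0..<K}" using assms(5,8) S_def by auto
  have finS: "finite S" using finL finA S_def by simp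
  have "card (L \<union> A) = card L + (t + 1)"
    using card_Un_disjoint[OF finL finA] assms(8,9) by auto
  then have cS: "card S = card L + 1"
    unfolding S_def using card_Diff_subset[OF finW assms(10)] assms(11) by simp
  have fS: "row D ` S \<subseteq> carrier_vec N" using dc by auto
  have allK: "row D ` {0..<K} \<subseteq> carrier_vec N" using dc by auto
  have r0: "rank2 D {0..<K} = vec_space.dd N (row D ` {0..<K})"
    unfolding dc(1)[symmetric] by (rule rank2_dd) simp
  have rK: "vec_space.dd N (row D ` {0..<K}) = card L"
    using r0 assms(6,7) by linarith
  have bound: "vec_space.dd N (row D ` X) \<le> card L" if "X \<subseteq> S" for X
  proof -
    have "row D ` X \<subseteq> row D ` {0..<K}" using that SK by blast
    then have "vec_space.dd N (row D ` X) \<le> vec_space.dd N (row D ` {0..<K})"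
      by (rule vec_space.dd_mono[OF finite_imageI[OF finite_atLeastLessThan] allK])
    then show ?thesis using rK by linarith
  qed
  have ev: "even (card {k\<in>S. vec_space.dd N (row D ` (S - {k})) = card L \<and> row D k $ i \<noteq> 0})"
    by (rule main_comb[OF finS cS fS bound assms(12)])
  have eq: "{k\<in>S. vec_space.dd N (row D ` (S - {k})) = card L \<and> row D k $ i \<noteq> 0}
     = {k \<in> (L \<union> A) - W. rank2 D ((L \<union> A) - (W \<union> {k})) = card L \<and> D $$ (k, i) \<noteq> 0}"
  proof (rule Collect_cong)
    fix k
    show "(k \<in> S \<and> vec_space.dd N (row D ` (S - {k})) = card L \<and> row D k $ i \<noteq> 0) =
      (k \<in> L \<union> A - W \<and> rank2 D (L \<union> A - (W \<union> {k})) = card L \<and> D $$ (k, i) \<noteq> 0)"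
    proof (cases "k \<in> S")
      case True
      have kS: "k \<in> L \<union> A - W" using True unfolding S_def .
      have "k < K" using True SK by auto
      then have e1: "row D k $ i = D $$ (k, i)" using dc assms(12) by simp
      have e2: "L \<union> A - (W \<union> {k}) = S - {k}" unfolding S_def by blast
      have e3: "rank2 D (S - {k}) = vec_space.dd N (row D ` (S - {k}))"
        unfolding dc(1)[symmetric] by (rule rank2_dd) (use finS in simp)
      show ?thesis by (simp only: kS True e1 e2 e3 simp_thms)
    next
      case False
      then have "k \<notin> L \<union> A - W" unfolding S_def .
      then show ?thesis using False by blast
    qed
  qed
  show ?thesis using ev unfolding eq .
qed

end
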